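(* $U(1,\infty)=\{2314,\,3124,\,3142\}$, and for every integer $t\ge 2$, $$U(1,t)=\{2314,\,3124,\,3142,\,(t+1)\,t\,(t-1)\cdots 2\,1\,(t+2)\},$$ where the last permutation has length $t+2$ and lists $t+1,t,\dots,1$ in decreasing order followed by $t+2$.
   Context: Forkstack sorting with capacities $s,t\in\{1,2,3,\dots\}\cup\{\infty\}$: a permutation $\pi=\pi_1\cdots\pi_n$ of $\{1,\dots,n\}$ is placed on an input stack with $\pi_1$ on top; a working stack and an output stack are initially empty. A move either (i) removes the top $k$ elements of the input stack ($1\le k\le s$) and places them as a block, relative order unchanged, on top of the working stack, or (ii) removes the top $l$ elements of the working stack ($1\le l\le t$) and places them as a block, relative order unchanged, on top of the output stack. $\pi$ is sortable if some sequence of moves ends with input and working stacks empty and the output stack reading $1,2,\dots,n$ from top to bottom. $\mathcal F(s,t)$ is the set of sortable permutations. A permutation $\sigma$ is involved in $\pi$ if some subsequence of $\pi$ of length $|\sigma|$ has entries in the same relative order as $\sigma$. $U(s,t)$ is the set of involvement-minimal permutations not in $\mathcal F(s,t)$. Permutations are written in one-line notation. *)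

theory Defs
  imports Main "HOL-Library.Extended_Nat"
begin

text \<open>Lists of naturals; the head of a list is the top of the stack.
  A permutation of length n is a list containing each of 1..n exactly once,
  written in one-line notation.\<close>

definition is_perm :: "nat list \<Rightarrow> bool" where
  "is_perm p \<longleftrightarrow> distinct p \<and> set p = {1..length p}"

text \<open>States: (input stack, working stack, output stack).\<close>
type_synonym fstate = "nat list \<times> nat list \<times> nat list"

inductive fork_move :: "enat \<Rightarrow> enat \<Rightarrow> fstate \<Rightarrow> fstate \<Rightarrow> bool" for s t where
  push: "\<lbrakk>1 \<le> k; enat k \<le> s; k \<le> length inp\<rbrakk> \<Longrightarrow>
     fork_move s t (inp, w, out) (drop k inp, take k inp @ w, out)"
| pop: "\<lbrakk>1 \<le> l; enat l \<le> t; l \<le> length w\<rbrakk> \<Longrightarrow>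
     fork_move s t (inp, w, out) (inp, drop l w, take l w @ out)"

definition fork_sortable :: "enat \<Rightarrow> enat \<Rightarrow> nat list \<Rightarrow> bool" where
  "fork_sortable s t p \<longleftrightarrow>
     (fork_move s t)\<^sup>*\<^sup>* (p, [], []) ([], [], [1..<length p + 1])"

definition forkF :: "enat \<Rightarrow> enat \<Rightarrow> nat list set" where
  "forkF s t = {p. is_perm p \<and> fork_sortable s t p}"

definition involved :: "nat list \<Rightarrow> nat list \<Rightarrow> bool" where
  "involved q p \<longleftrightarrow> (\<exists>I. length (nths p I) = length q \<and>
      (\<forall>i < length q. \<forall>j < length q. q ! i < q ! j \<longleftrightarrow> nths p I ! i < nths p I ! j))"

definition forkU :: "enat \<Rightarrow> enat \<Rightarrow> nat list set" where
  "forkU s t = {p. is_perm p \<and> p \<notin> forkF s t \<and>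
      (\<forall>q. is_perm q \<and> involved q p \<and> q \<noteq> p \<longrightarrow> q \<in> forkF s t)}"

end

theory Submission
  imports Defs "HOL-Library.Sublist"
begin


definition emb :: "nat list \<Rightarrow> nat list \<Rightarrow> bool" where
  "emb q p \<longleftrightarrow> (\<exists>f. (\<forall>i j. i < j \<longrightarrow> j < length q \<longrightarrow> f i < f j) \<and>
     (\<forall>i < length q. f i < length p) \<and>
     (\<forall>i < length q. \<forall>j < length q. q ! i < q ! j \<longleftrightarrow> p ! (f i) < p ! (f j)))"

lemma subseq_idx_take:
  "(\<forall>i j. i < j \<longrightarrow> j < m \<longrightarrow> f i < f j) \<Longrightarrow> (\<forall>i<m. f i < N) \<Longrightarrow> N \<le> length p \<Longrightarrow>
   subseq (map (\<lambda>i. p ! (f i)) [0..<m]) (take N p)"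
proof (induction m arbitrary: N)
  case 0
  then show ?case by simp
next
  case (Suc m)
  have fm: "f m < N" using Suc.prems by simp
  have IH: "subseq (map (\<lambda>i. p ! (f i)) [0..<m]) (take (f m) p)"
    using Suc.IH[of "f m"] Suc.prems fm by (auto simp: less_Suc_eq)
  have len: "f m < length (take N p)" using fm Suc.prems by simp
  have e1: "take N p = take (f m) (take N p) @ (take N p) ! (f m) # drop (Suc (f m)) (take N p)"
    by (rule id_take_nth_drop[OF len])
  have e2: "take (f m) (take N p) = take (f m) p" using fm by simp
  have e3: "(take N p) ! (f m) = p ! (f m)" using fm by simp
  have dec: "take N p = take (f m) p @ [p ! (f m)] @ drop (Suc (f m)) (take N p)"
    using e1 unfolding e2 e3 by (simp only: append_Cons append_Nil)
  have s1: "subseq (map (\<lambda>i. p ! (f i)) [0..<m] @ [p ! (f m)]) (take (f m) p @ [p ! (f m)])"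
    using IH by (rule list_emb_append_mono) simp
  have s2: "subseq (take (f m) p @ [p ! (f m)]) ((take (f m) p @ [p ! (f m)]) @ drop (Suc (f m)) (take N p))"
    by (rule subseq_rev_drop_many) simp
  have s3: "subseq (map (\<lambda>i. p ! (f i)) [0..<m] @ [p ! (f m)]) ((take (f m) p @ [p ! (f m)]) @ drop (Suc (f m)) (take N p))"
    by (rule subseq_order.trans[OF s1 s2])
  have "subseq (map (\<lambda>i. p ! (f i)) [0..<m] @ [p ! (f m)]) (take N p)"
    using s3 dec by (metis append_assoc)
  then show ?case by simp
qed

lemma subseq_imp_idx:
  "subseq xs ys \<Longrightarrow> \<exists>f. (\<forall>i j. i < j \<longrightarrow> j < length xs \<longrightarrow> f i < f j) \<and>
     (\<forall>i < length xs. f i < length ys \<and> xs ! i = ys ! f i)"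
proof (induction rule: list_emb.induct)
  case (list_emb_Nil ys)
  then show ?case by simp
next
  case (list_emb_Cons xs ys y)
  then obtain f where f: "\<forall>i j. i < j \<longrightarrow> j < length xs \<longrightarrow> f i < f j"
     "\<forall>i < length xs. f i < length ys \<and> xs ! i = ys ! f i" by blast
  show ?case
    by (rule exI[of _ "\<lambda>i. Suc (f i)"]) (use f in auto)
next
  case (list_emb_Cons2 x y xs ys)
  then obtain f where f: "\<forall>i j. i < j \<longrightarrow> j < length xs \<longrightarrow> f i < f j"
     "\<forall>i < length xs. f i < length ys \<and> xs ! i = ys ! f i" by blast
  have m: "\<forall>i j. i < j \<longrightarrow> j < length (x # xs) \<longrightarrow> (if i = 0 then 0 else Suc (f (i - 1))) < (if j = 0 then 0 else Suc (f (j - 1)))"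
  proof (intro allI impI)
    fix i j :: nat assume "i < j" "j < length (x # xs)"
    then show "(if i = 0 then 0 else Suc (f (i - 1))) < (if j = 0 then 0 else Suc (f (j - 1)))"
      using f(1)[rule_format, of "i - 1" "j - 1"] by auto
  qed
  have n: "\<forall>i < length (x # xs). (if i = 0 then 0 else Suc (f (i - 1))) < length (y # ys) \<and>
         (x # xs) ! i = (y # ys) ! (if i = 0 then 0 else Suc (f (i - 1)))"
  proof (intro allI impI)
    fix i assume "i < length (x # xs)"
    then show "(if i = 0 then 0 else Suc (f (i - 1))) < length (y # ys) \<and>
         (x # xs) ! i = (y # ys) ! (if i = 0 then 0 else Suc (f (i - 1)))"
      using f(2)[rule_format, of "i - 1"] list_emb_Cons2 by (auto simp: nth_Cons')
  qed
  show ?case by (rule exI[of _ "\<lambda>i. if i = 0 then 0 else Suc (f (i - 1))"], rule conjI[OF m n])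
qed

lemma involved_iff_emb: "involved q p \<longleftrightarrow> emb q p"
proof
  assume "involved q p"
  then obtain I where I: "length (nths p I) = length q"
    "\<forall>i < length q. \<forall>j < length q. q ! i < q ! j \<longleftrightarrow> nths p I ! i < nths p I ! j"
    unfolding involved_def by blast
  have "subseq (nths p I) p" using subseq_conv_nths by blast
  then obtain f where f: "\<forall>i j. i < j \<longrightarrow> j < length (nths p I) \<longrightarrow> f i < f j"
     "\<forall>i < length (nths p I). f i < length p \<and> nths p I ! i = p ! f i"
    using subseq_imp_idx by blast
  show "emb q p" unfolding emb_def
    by (rule exI[of _ f]) (use f I in auto)
next
  assume "emb q p"
  then obtain f where f: "\<forall>i j. i < j \<longrightarrow> j < length q \<longrightarrow> f i < f j"
     "\<forall>i < length q. f i < length p"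
     "\<forall>i < length q. \<forall>j < length q. q ! i < q ! j \<longleftrightarrow> p ! (f i) < p ! (f j)"
    unfolding emb_def by blast
  have "subseq (map (\<lambda>i. p ! (f i)) [0..<length q]) (take (length p) p)"
    using subseq_idx_take[where p=p and N="length p", OF f(1) f(2)] by simp
  then obtain N where N: "map (\<lambda>i. p ! (f i)) [0..<length q] = nths p N"
    using subseq_conv_nths by auto
  have L: "length (nths p N) = length q" using arg_cong[OF N, of length] by simp
  have E: "\<forall>i<length q. nths p N ! i = p ! f i"
  proof (intro allI impI)
    fix i assume "i < length q"
    then show "nths p N ! i = p ! f i" using arg_cong[OF N, of "\<lambda>xs. xs ! i"] by simp
  qed
  show "involved q p" unfolding involved_def
  proof (rule exI[of _ N], rule conjI[OF L], intro allI impI)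
    fix i j assume "i < length q" "j < length q"
    then show "(q ! i < q ! j) = (nths p N ! i < nths p N ! j)" using E f(3) by simp
  qed
qed

lemma emb_trans: "emb q r \<Longrightarrow> emb r p \<Longrightarrow> emb q p"
  unfolding emb_def
proof (elim exE conjE)
  fix f g
  assume f: "\<forall>i j. i < j \<longrightarrow> j < length q \<longrightarrow> f i < f j"
     "\<forall>i < length q. f i < length r"
     "\<forall>i < length q. \<forall>j < length q. q ! i < q ! j \<longleftrightarrow> r ! (f i) < r ! (f j)"
  assume g: "\<forall>i j. i < j \<longrightarrow> j < length r \<longrightarrow> g i < g j"
     "\<forall>i < length r. g i < length p"
     "\<forall>i < length r. \<forall>j < length r. r ! i < r ! j \<longleftrightarrow> p ! (g i) < p ! (g j)"
  show "\<exists>h. (\<forall>i j. i < j \<longrightarrow> j < length q \<longrightarrow> h i < h j) \<and>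
     (\<forall>i < length q. h i < length p) \<and>
     (\<forall>i < length q. \<forall>j < length q. q ! i < q ! j \<longleftrightarrow> p ! (h i) < p ! (h j))"
    by (rule exI[of _ "g \<circ> f"]) (use f g in auto)
qed

lemma emb_length: "emb q p \<Longrightarrow> length q \<le> length p"
proof -
  assume "emb q p"
  then obtain f where f: "\<forall>i j. i < j \<longrightarrow> j < length q \<longrightarrow> f i < f j"
     "\<forall>i < length q. f i < length p" unfolding emb_def by blast
  have "\<forall>i < length q. i \<le> f i"
  proof (intro allI impI)
    fix i show "i < length q \<Longrightarrow> i \<le> f i"
      by (induction i) (use f(1) in \<open>auto simp: Suc_le_eq intro: le_less_trans\<close>)
  qed
  then show ?thesis using f(2)
    by (cases "length q") (auto, metis Suc_le_eq le_less_trans lessI not_le)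
qed



lemma lt4: "(i::nat) < 4 \<longleftrightarrow> i = 0 \<or> i = 1 \<or> i = 2 \<or> i = 3" by auto

lemma emb4I:
  assumes "a < b" "b < c" "c < d" "d < length p" "length L = 4"
    and "\<forall>i<4. \<forall>j<4. L ! i < L ! j \<longleftrightarrow> p ! ([a,b,c,d] ! i) < p ! ([a,b,c,d] ! j)"
  shows "emb L p"
  unfolding emb_def
proof (rule exI[of _ "\<lambda>i. [a,b,c,d] ! i"], intro conjI)
  show "\<forall>i j. i < j \<longrightarrow> j < length L \<longrightarrow> [a, b, c, d] ! i < [a, b, c, d] ! j"
  proof (intro allI impI)
    fix i j :: nat assume "i < j" "j < length L"
    then have "(i=0\<and>j=1) \<or> (i=0\<and>j=2) \<or> (i=0\<and>j=3) \<or> (i=1\<and>j=2) \<or> (i=1\<and>j=3) \<or> (i=2\<and>j=3)"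
      using assms(5) by arith
    then show "[a, b, c, d] ! i < [a, b, c, d] ! j" using assms(1-3) by auto
  qed
  show "\<forall>i<length L. [a, b, c, d] ! i < length p"
    using assms(1-5) by (auto simp: lt4)
  show "\<forall>i<length L. \<forall>j<length L. (L ! i < L ! j) = (p ! ([a, b, c, d] ! i) < p ! ([a, b, c, d] ! j))"
    using assms(5,6) by simp
qed

lemma filter_sorted_wrt:
  "(\<forall>i i'. i < i' \<longrightarrow> i' < length ys \<longrightarrow> P (ys ! i) \<longrightarrow> P (ys ! i') \<longrightarrow> R (ys ! i) (ys ! i'))
   \<Longrightarrow> sorted_wrt R (filter P ys)"
proof (induction ys)
  case Nil
  then show ?case by simp
next
  case (Cons y ys)
  have IH: "sorted_wrt R (filter P ys)"
    using Cons.prems by (intro Cons.IH) (metis Suc_mono nth_Cons_Suc length_Cons)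
  have "\<forall>x\<in>set (filter P ys). P y \<longrightarrow> R y x"
  proof (intro ballI impI)
    fix x assume "x \<in> set (filter P ys)" "P y"
    then obtain i where "i < length ys" "ys ! i = x" "P x" by (auto simp: in_set_conv_nth)
    then show "R y x" using Cons.prems[rule_format, of 0 "Suc i"] \<open>P y\<close> by auto
  qed
  then show ?case using IH by auto
qed

lemma distinct_nth_notin_take: "distinct p \<Longrightarrow> j < length p \<Longrightarrow> p ! j \<notin> set (take j p)"
proof
  assume d: "distinct p" "j < length p" "p ! j \<in> set (take j p)"
  then obtain i where i: "i < length (take j p)" "take j p ! i = p ! j" by (auto simp: in_set_conv_nth)
  then have "i < j" "p ! i = p ! j" by auto
  then show False using d nth_eq_iff_index_eq[of p i j] by auto
qed

definition st :: "nat list \<Rightarrow> nat \<Rightarrow> nat \<Rightarrow> fstate" where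
  "st p m k = (drop k p, rev (filter (\<lambda>x. x \<le> m) (take k p)), [Suc m..<Suc (length p)])"

definition famL :: "nat \<Rightarrow> nat list" where
  "famL t' = rev [1..<t'+2] @ [t'+2]"

lemma famL_len: "length (famL t') = t' + 2" by (simp add: famL_def)

lemma famL_nth: "i < t' + 2 \<Longrightarrow> famL t' ! i = (if i \<le> t' then t' + 1 - i else t' + 2)"
  by (auto simp: famL_def nth_append rev_nth simp del: upt_Suc)


locale srt =
  fixes p :: "nat list" and t :: enat
  assumes perm: "is_perm p"
    and tpos: "1 \<le> t"
    and a1: "\<not> emb [2,3,1,4] p" and a2: "\<not> emb [3,1,2,4] p" and a3: "\<not> emb [3,1,4,2] p"
    and a4: "\<And>t'. t = enat t' \<Longrightarrow> \<not> emb (famL t') p"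
begin

abbreviation "n \<equiv> length p"

lemma dist: "distinct p" using perm by (simp add: is_perm_def)
lemma setp: "set p = {1..n}" using perm by (simp add: is_perm_def)

lemma val_range: "i < n \<Longrightarrow> 1 \<le> p ! i \<and> p ! i \<le> n"
  using setp nth_mem by fastforce

lemma val_ex: "1 \<le> v \<Longrightarrow> v \<le> n \<Longrightarrow> \<exists>i < n. p ! i = v"
  using setp by (metis atLeastAtMost_iff in_set_conv_nth)

lemma inj: "i < n \<Longrightarrow> j < n \<Longrightarrow> p ! i = p ! j \<Longrightarrow> i = j"
  using dist by (simp add: nth_eq_iff_index_eq)

definition C :: "nat \<Rightarrow> nat \<Rightarrow> bool" where
  "C m k \<longleftrightarrow> (\<forall>i i' q. i < i' \<longrightarrow> i' < k \<longrightarrow> q < n \<longrightarrow> p ! i \<le> m \<longrightarrow> p ! i' < p ! i \<longrightarrow>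
      p ! i' < p ! q \<longrightarrow> p ! q < p ! i \<longrightarrow> i < q \<and> q < i')"

definition Inv :: "nat \<Rightarrow> nat \<Rightarrow> bool" where
  "Inv m k \<longleftrightarrow> m \<le> n \<and> k \<le> n \<and> (\<forall>i. k \<le> i \<longrightarrow> i < n \<longrightarrow> p ! i \<le> m) \<and> C m k \<and>
     (k = 0 \<or> m < p ! (k - 1))"

abbreviation "mv \<equiv> fork_move 1 t"

lemma push_one:
  assumes "k < n" "p ! k \<le> m"
  shows "mv (st p m k) (st p m (Suc k))"
proof -
  have m: "mv (drop k p, rev (filter (\<lambda>x. x \<le> m) (take k p)), [Suc m..<Suc n])
     (drop 1 (drop k p), take 1 (drop k p) @ rev (filter (\<lambda>x. x \<le> m) (take k p)), [Suc m..<Suc n])"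
    by (rule fork_move.push) (use assms in \<open>auto simp: one_enat_def\<close>)
  have e1: "drop 1 (drop k p) = drop (Suc k) p" by simp
  have e2': "drop k p = p ! k # drop (Suc k) p" by (rule Cons_nth_drop_Suc[symmetric, OF assms(1)])
  have e2: "take 1 (drop k p) = [p ! k]" unfolding e2' by simp
  have e3: "take (Suc k) p = take k p @ [p ! k]" using assms(1) by (rule take_Suc_conv_app_nth)
  have e4: "rev (filter (\<lambda>x. x \<le> m) (take (Suc k) p)) = [p ! k] @ rev (filter (\<lambda>x. x \<le> m) (take k p))"
    unfolding e3 using assms(2) by simp
  show ?thesis using m unfolding st_def e1 e2 e4 .
qed

lemma push_many:
  "k \<le> k' \<Longrightarrow> k' \<le> n \<Longrightarrow> (\<forall>i. k \<le> i \<longrightarrow> i < k' \<longrightarrow> p ! i \<le> m) \<Longrightarrow> mv\<^sup>*\<^sup>* (st p m k) (st p m k')"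
proof (induction k' rule: nat_induct)
  case 0
  then show ?case by simp
next
  case (Suc k')
  show ?case
  proof (cases "k = Suc k'")
    case True
    then show ?thesis by simp
  next
    case False
    then have "k \<le> k'" using Suc.prems by simp
    then have r: "mv\<^sup>*\<^sup>* (st p m k) (st p m k')" using Suc by simp
    have "mv (st p m k') (st p m (Suc k'))"
      by (rule push_one) (use Suc.prems \<open>k \<le> k'\<close> in auto)
    then show ?thesis using r by simp
  qed
qed

lemma Inv_init: "Inv n 0"
  unfolding Inv_def C_def using val_range by auto

lemma final_eq: "st p 0 n = ([], [], [1..<Suc n])"
proof -
  have "filter (\<lambda>x. x \<le> 0) p = []" using setp by (auto simp: filter_empty_conv)
  then show ?thesis by (simp add: st_def)
qed

lemma init_eq: "st p n 0 = (p, [], [])"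
  by (simp add: st_def)

end



lemma all4: "(\<forall>i<(4::nat). P i) \<longleftrightarrow> P 0 \<and> P 1 \<and> P 2 \<and> P 3"
  by (auto simp: lt4)

lemma upt_app: "i \<le> j \<Longrightarrow> j \<le> k \<Longrightarrow> [i..<j] @ [j..<k] = [i..<k]"
  using upt_add_eq_append[of i j "k - j"] by simp

context srt
begin

lemma push_case_inv:
  assumes I: "Inv m k" and m0: "m \<noteq> 0" and j: "j < n" "p ! j = m" and kj: "k \<le> j"
  shows "Inv (m - 1) (Suc j)"
proof -
  from I have mn: "m \<le> n" "k \<le> n" and I1: "\<forall>i. k \<le> i \<longrightarrow> i < n \<longrightarrow> p ! i \<le> m"
    unfolding Inv_def by auto
  have C': "C (m - 1) (Suc j)"
    unfolding C_def
  proof (intro allI impI)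
    fix i i' q
    assume h: "i < i'" "i' < Suc j" "q < n" "p ! i \<le> m - 1" "p ! i' < p ! i" "p ! i' < p ! q" "p ! q < p ! i"
    have him: "p ! i < m" using h(4) m0 by linarith
    have "i' \<noteq> j" using h j him by auto
    then have i'j: "i' < j" using h by simp
    have qj: "q \<noteq> j" using h j him by auto
    have qi: "q \<noteq> i" "q \<noteq> i'" using h by auto
    show "i < q \<and> q < i'"
    proof (rule ccontr)
      assume nq: "\<not> (i < q \<and> q < i')"
      have "q < i \<or> (i' < q \<and> q < j) \<or> j < q" using nq qi qj i'j h by linarith
      then show False
      proof (elim disjE conjE)
        assume "q < i"
        have "emb [2,3,1,4] p"
          by (rule emb4I[of q i i' j]) (use \<open>q < i\<close> h i'j j him in \<open>simp_all add: all4\<close>)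
        then show False using a1 by simp
      next
        assume "i' < q" "q < j"
        have "emb [3,1,2,4] p"
          by (rule emb4I[of i i' q j]) (use \<open>i' < q\<close> \<open>q < j\<close> h i'j j him in \<open>simp_all add: all4\<close>)
        then show False using a2 by simp
      next
        assume "j < q"
        have "emb [3,1,4,2] p"
          by (rule emb4I[of i i' j q]) (use \<open>j < q\<close> h i'j j him in \<open>simp_all add: all4\<close>)
        then show False using a3 by simp
      qed
    qed
  qed
  have I1': "\<forall>i. Suc j \<le> i \<longrightarrow> i < n \<longrightarrow> p ! i \<le> m - 1"
  proof (intro allI impI)
    fix i assume "Suc j \<le> i" "i < n"
    then have "p ! i \<le> m" "p ! i \<noteq> m" using I1 kj inj[of i j] j by auto
    then show "p ! i \<le> m - 1" by linarith
  qed
  show ?thesis unfolding Inv_def using C' I1' mn j m0 by auto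
qed

lemma push_case_move:
  assumes m0: "m \<noteq> 0" and j: "j < n" "p ! j = m" and mn: "m \<le> n"
  shows "mv (st p m (Suc j)) (st p (m - 1) (Suc j))"
proof -
  have e3: "take (Suc j) p = take j p @ [m]" using take_Suc_conv_app_nth[OF j(1)] j(2) by simp
  have nm: "m \<notin> set (take j p)" using distinct_nth_notin_take[OF dist j(1)] j(2) by simp
  have ef: "filter (\<lambda>x. x \<le> m) (take j p) = filter (\<lambda>x. x \<le> m - 1) (take j p)"
  proof (rule filter_cong[OF refl])
    fix x assume "x \<in> set (take j p)"
    then have "x \<noteq> m" using nm by auto
    then show "(x \<le> m) = (x \<le> m - 1)" by arith
  qed
  define W where "W = rev (filter (\<lambda>x. x \<le> m - 1) (take (Suc j) p))"
  have w: "rev (filter (\<lambda>x. x \<le> m) (take (Suc j) p)) = m # W"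
    unfolding W_def e3 using ef m0 by simp
  have mv0: "mv (drop (Suc j) p, m # W, [Suc m..<Suc n]) (drop (Suc j) p, drop 1 (m # W), take 1 (m # W) @ [Suc m..<Suc n])"
    by (rule fork_move.pop) (use tpos in \<open>auto simp: one_enat_def\<close>)
  have o: "take 1 (m # W) @ [Suc m..<Suc n] = [Suc (m - 1)..<Suc n]"
    using m0 mn by (simp add: upt_conv_Cons)
  show ?thesis using mv0 unfolding st_def w o by (simp add: W_def)
qed

end



declare upt_Suc[simp del]

context srt
begin

lemma pop_case:
  assumes I: "Inv m k" and m0: "m \<noteq> 0" and j: "j < n" "p ! j = m" and jk: "j < k"
  shows "\<exists>b. 1 \<le> b \<and> b \<le> m \<and> mv (st p m k) (st p (b - 1) k) \<and> Inv (b - 1) k"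
proof -
  from I have mn: "m \<le> n" "k \<le> n" and I1: "\<forall>i. k \<le> i \<longrightarrow> i < n \<longrightarrow> p ! i \<le> m"
    and Cm: "C m k" and I3: "m < p ! (k - 1)"
    unfolding Inv_def using jk by auto
  define B where "B = {v. \<exists>i. j \<le> i \<and> i < k \<and> p ! i = v \<and> v \<le> m}"
  have finB: "finite B" by (rule finite_subset[of _ "{..m}"]) (auto simp: B_def)
  have mB: "m \<in> B" using j jk unfolding B_def by auto
  define b where "b = Min B"
  have bB: "b \<in> B" unfolding b_def by (rule Min_in[OF finB]) (use mB in auto)
  have bmin: "\<And>v. v \<in> B \<Longrightarrow> b \<le> v" using finB unfolding b_def by simp
  have bm: "b \<le> m" using bmin mB by simp
  obtain ib where ib: "j \<le> ib" "ib < k" "p ! ib = b" using bB unfolding B_def by auto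
  have b1: "1 \<le> b" using val_range[of ib] ib mn by auto
  have F1: "\<And>i i'. j \<le> i \<Longrightarrow> i < i' \<Longrightarrow> i' < k \<Longrightarrow> p ! i \<le> m \<Longrightarrow> p ! i' \<le> m \<Longrightarrow> p ! i' < p ! i"
  proof (rule ccontr)
    fix i i' assume h: "j \<le> i" "i < i'" "i' < k" "p ! i \<le> m" "p ! i' \<le> m" "\<not> p ! i' < p ! i"
    have ne: "p ! i \<noteq> p ! i'" using inj[of i i'] h mn by auto
    then have lt: "p ! i < p ! i'" using h by linarith
    have "i \<noteq> j" using lt h j by auto
    then have ji: "j < i" using h by simp
    have "p ! i' \<noteq> m" using inj[of i' j] h j mn ji by auto
    then have "p ! i' < m" using h by simp
    then have "j < i' \<and> i' < i"
      using Cm[unfolded C_def, rule_format, of j i i'] ji h j lt mn by auto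
    then show False using h by simp
  qed
  have F2: "\<And>v. b \<le> v \<Longrightarrow> v \<le> m \<Longrightarrow> v \<in> B"
  proof -
    fix v assume v: "b \<le> v" "v \<le> m"
    show "v \<in> B"
    proof (cases "v = b \<or> v = m")
      case True then show ?thesis using bB mB by auto
    next
      case False
      then have bv: "b < v" "v < m" using v by auto
      obtain iv where iv: "iv < n" "p ! iv = v" using val_ex[of v] b1 bv mn by auto
      have "ib \<noteq> j" using ib j bv by auto
      then have jib: "j < ib" using ib by simp
      have "j < iv \<and> iv < ib"
        using Cm[unfolded C_def, rule_format, of j ib iv] jib ib iv j bv by auto
      then have "j \<le> iv" "iv < k" using ib by auto
      then show ?thesis unfolding B_def using iv v by blast
    qed
  qed
  have F3: "\<And>q. q < j \<Longrightarrow> p ! q \<le> m \<Longrightarrow> p ! q < b"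
  proof (rule ccontr)
    fix q assume q: "q < j" "p ! q \<le> m" "\<not> p ! q < b"
    then have "p ! q \<in> B" using F2 by simp
    then obtain i where i: "j \<le> i" "i < k" "p ! i = p ! q" unfolding B_def by auto
    then have "i = q" using inj[of i q] q j mn by auto
    then show False using i q by simp
  qed
  have F5: "\<And>i. k \<le> i \<Longrightarrow> i < n \<Longrightarrow> p ! i < b"
  proof (rule ccontr)
    fix i assume i: "k \<le> i" "i < n" "\<not> p ! i < b"
    then have "p ! i \<in> B" using F2 I1 by simp
    then obtain i' where i': "j \<le> i'" "i' < k" "p ! i' = p ! i" unfolding B_def by auto
    then have "i' = i" using inj[of i' i] i mn by auto
    then show False using i i' by simp
  qed
  have F4: "\<And>i. j \<le> i \<Longrightarrow> i < k \<Longrightarrow> p ! i \<le> m \<Longrightarrow> b \<le> p ! i"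
    using bmin unfolding B_def by auto
  define D where "D = drop j (take k p)"
  have tk: "take k p = take j p @ D"
  proof -
    have "take j (take k p) = take j p" using jk by simp
    then show ?thesis unfolding D_def by (metis append_take_drop_id)
  qed
  have lenD: "length D = k - j" unfolding D_def using mn by simp
  have nthD: "\<And>i. i < length D \<Longrightarrow> D ! i = p ! (j + i)"
    unfolding D_def using mn jk by auto
  have setD: "\<And>x. x \<in> set D \<longleftrightarrow> (\<exists>i. j \<le> i \<and> i < k \<and> p ! i = x)"
  proof
    fix x assume "x \<in> set D"
    then obtain i where "i < length D" "D ! i = x" by (auto simp: in_set_conv_nth)
    then show "\<exists>i. j \<le> i \<and> i < k \<and> p ! i = x" using nthD lenD
      by (intro exI[of _ "j + i"]) auto
  next
    fix x assume "\<exists>i. j \<le> i \<and> i < k \<and> p ! i = x"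
    then obtain i where i: "j \<le> i" "i < k" "p ! i = x" by blast
    then have "i - j < length D" "D ! (i - j) = x" using nthD lenD by auto
    then show "x \<in> set D" by (metis nth_mem)
  qed
  have distD: "distinct D" unfolding D_def using dist by simp
  define X where "X = filter (\<lambda>x. x \<le> m) D"
  have sX: "sorted_wrt (\<lambda>x y. y < x) X"
    unfolding X_def
  proof (rule filter_sorted_wrt, intro allI impI)
    fix i i' assume h: "i < i'" "i' < length D" "D ! i \<le> m" "D ! i' \<le> m"
    then show "D ! i' < D ! i" using nthD[of i] nthD[of i'] F1[of "j + i" "j + i'"] lenD by auto
  qed
  have setX: "set X = {b..m}"
  proof
    show "set X \<subseteq> {b..m}" unfolding X_def using setD F4 by auto
    show "{b..m} \<subseteq> set X"
    proof
      fix v assume "v \<in> {b..m}"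
      then have "v \<in> B" using F2 by auto
      then show "v \<in> set X" unfolding X_def B_def using setD by auto
    qed
  qed
  have distX: "distinct X" unfolding X_def using distD by simp
  have rX: "rev X = [b..<Suc m]"
  proof (rule sorted_distinct_set_unique)
    have "sorted_wrt (\<lambda>x y. y \<le> x) X" by (rule sorted_wrt_mono_rel[OF _ sX]) auto
    then show "sorted (rev X)" by (simp add: sorted_wrt_rev)
    show "distinct (rev X)" using distX by simp
    show "sorted [b..<Suc m]" by (rule sorted_upt)
    show "distinct [b..<Suc m]" by simp
    show "set (rev X) = set [b..<Suc m]" using setX by (auto simp: atLeastLessThanSuc_atLeastAtMost)
  qed
  define A where "A = filter (\<lambda>x. x \<le> b - 1) (take k p)"
  have FA: "filter (\<lambda>x. x \<le> m) (take j p) = A"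
  proof -
    have d0: "filter (\<lambda>x. x \<le> b - 1) D = []"
    proof (rule filter_False, rule ballI)
      fix x assume "x \<in> set D"
      then obtain i where "j \<le> i" "i < k" "p ! i = x" using setD by blast
      then show "\<not> x \<le> b - 1" using F4[of i] b1 bm by fastforce
    qed
    have d1: "filter (\<lambda>x. x \<le> m) (take j p) = filter (\<lambda>x. x \<le> b - 1) (take j p)"
    proof (rule filter_cong[OF refl])
      fix x assume "x \<in> set (take j p)"
      then obtain q where "q < j" "p ! q = x" using jk mn by (auto simp: in_set_conv_nth)
      then show "(x \<le> m) = (x \<le> b - 1)" using F3[of q] b1 bm by fastforce
    qed
    show ?thesis unfolding A_def tk using d0 d1 by simp
  qed
  have W: "rev (filter (\<lambda>x. x \<le> m) (take k p)) = [b..<Suc m] @ rev A"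
    unfolding tk using FA rX unfolding X_def by simp
  define d where "d = Suc m - b"
  have d1: "1 \<le> d" using bm unfolding d_def by simp
  have dt: "enat d \<le> t"
  proof (cases t)
    case (enat t')
    show ?thesis
    proof (rule ccontr)
      assume "\<not> enat d \<le> t"
      then have dt': "t' < d" using enat by simp
      then have tb: "b + t' \<le> m" unfolding d_def by arith
      define pos where "pos v = (SOME i. j \<le> i \<and> i < k \<and> p ! i = v)" for v
      have posP: "\<And>v. b \<le> v \<Longrightarrow> v \<le> m \<Longrightarrow> j \<le> pos v \<and> pos v < k \<and> p ! (pos v) = v"
      proof -
        fix v assume "b \<le> v" "v \<le> m"
        then have "\<exists>i. j \<le> i \<and> i < k \<and> p ! i = v" using F2 unfolding B_def by blast
        then show "j \<le> pos v \<and> pos v < k \<and> p ! (pos v) = v"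
          unfolding pos_def by (rule someI_ex)
      qed
      define f where "f i = (if i \<le> t' then pos (m - i) else k - 1)" for i
      have fv: "\<And>i. i \<le> t' \<Longrightarrow> p ! (f i) = m - i \<and> j \<le> f i \<and> f i < k"
      proof -
        fix i assume i: "i \<le> t'"
        then have "b \<le> m - i" using tb by arith
        then show "p ! (f i) = m - i \<and> j \<le> f i \<and> f i < k"
          unfolding f_def using posP[of "m - i"] i by auto
      qed
      have posmono: "\<And>i i'. i < i' \<Longrightarrow> i' \<le> t' \<Longrightarrow> f i < f i'"
      proof (rule ccontr)
        fix i i' assume h: "i < i'" "i' \<le> t'" "\<not> f i < f i'"
        have v1: "p ! (f i) = m - i" "j \<le> f i" "f i < k" using fv[of i] h by auto
        have v2: "p ! (f i') = m - i'" "j \<le> f i'" "f i' < k" using fv[of i'] h by auto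
        show False
        proof (cases "f i = f i'")
          case True
          then have "m - i = m - i'" using v1 v2 by simp
          then show False using h tb by arith
        next
          case False
          then have "f i' < f i" using h by simp
          then have "p ! (f i) < p ! (f i')" using F1[of "f i'" "f i"] v1 v2 by auto
          then have "m - i < m - i'" using v1 v2 by simp
          then show False using h tb by arith
        qed
      qed
      have "emb (famL t') p"
        unfolding emb_def famL_len
      proof (rule exI[of _ f], intro conjI allI impI)
        fix i i' :: nat assume h: "i < i'" "i' < t' + 2"
        show "f i < f i'"
        proof (cases "i' \<le> t'")
          case True then show ?thesis using posmono h by simp
        next
          case False
          then have "i' = t' + 1" using h by simp
          then have fi': "f i' = k - 1" unfolding f_def by simp
          have "i \<le> t'" using h \<open>i' = t' + 1\<close> by simp
          then have "p ! (f i) = m - i" "f i < k" using fv by auto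
          moreover have "f i \<noteq> k - 1" using I3 \<open>p ! (f i) = m - i\<close> by auto
          ultimately show ?thesis using fi' by simp
        qed
      next
        fix i assume "i < t' + 2"
        then show "f i < n" using fv[of i] mn jk unfolding f_def by (cases "i \<le> t'") auto
      next
        fix i i' assume h: "i < t' + 2" "i' < t' + 2"
        have fk: "f (t' + 1) = k - 1" unfolding f_def by simp
        show "(famL t' ! i < famL t' ! i') = (p ! f i < p ! f i')"
        proof (cases "i \<le> t'")
          case True
          note ti = True
          show ?thesis
          proof (cases "i' \<le> t'")
            case True
            have e: "famL t' ! i = t' + 1 - i" "famL t' ! i' = t' + 1 - i'"
              using famL_nth[of i t'] famL_nth[of i' t'] h ti True by auto
            have e': "p ! f i = m - i" "p ! f i' = m - i'" using fv[of i] fv[of i'] ti True by auto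
            show ?thesis unfolding e e' using ti True tb by arith
          next
            case False
            then have i': "i' = t' + 1" using h by simp
            have e: "famL t' ! i = t' + 1 - i" "famL t' ! i' = t' + 2"
              using famL_nth[of i t'] famL_nth[of i' t'] h ti i' by auto
            have e': "p ! f i = m - i" "p ! f i' = p ! (k - 1)" using fv[of i] fk ti i' by auto
            show ?thesis unfolding e e' using I3 by arith
          qed
        next
          case False
          then have i1: "i = t' + 1" using h by simp
          show ?thesis
          proof (cases "i' \<le> t'")
            case True
            have e: "famL t' ! i = t' + 2" "famL t' ! i' = t' + 1 - i'"
              using famL_nth[of i t'] famL_nth[of i' t'] h True i1 by auto
            have e': "p ! f i = p ! (k - 1)" "p ! f i' = m - i'" using fv[of i'] fk True i1 by auto
            show ?thesis unfolding e e' using I3 by arith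
          next
            case False
            then have "i' = t' + 1" using h by simp
            then show ?thesis using i1 by simp
          qed
        qed
      qed
      then show False using a4[OF enat] by simp
    qed
  qed simp
  have lenW: "d \<le> length ([b..<Suc m] @ rev A)" unfolding d_def by simp
  have mv0: "mv (drop k p, [b..<Suc m] @ rev A, [Suc m..<Suc n])
     (drop k p, drop d ([b..<Suc m] @ rev A), take d ([b..<Suc m] @ rev A) @ [Suc m..<Suc n])"
    by (rule fork_move.pop[OF d1 dt lenW])
  have e1: "drop d ([b..<Suc m] @ rev A) = rev A" unfolding d_def by simp
  have e2: "take d ([b..<Suc m] @ rev A) @ [Suc m..<Suc n] = [Suc (b - 1)..<Suc n]"
    unfolding d_def using b1 bm mn by (simp add: upt_app)
  have mv1: "mv (drop k p, [b..<Suc m] @ rev A, [Suc m..<Suc n]) (drop k p, rev A, [Suc (b - 1)..<Suc n])"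
    using mv0 unfolding e1 e2 .
  have st1: "st p m k = (drop k p, [b..<Suc m] @ rev A, [Suc m..<Suc n])"
    unfolding st_def W by simp
  have st2: "st p (b - 1) k = (drop k p, rev A, [Suc (b - 1)..<Suc n])"
    unfolding st_def A_def by simp
  have mvs: "mv (st p m k) (st p (b - 1) k)"
    unfolding st1 st2 by (rule mv1)
  have inv: "Inv (b - 1) k"
    unfolding Inv_def
  proof (intro conjI)
    show "b - 1 \<le> n" using bm mn by simp
    show "k \<le> n" using mn by simp
    show "\<forall>i. k \<le> i \<longrightarrow> i < n \<longrightarrow> p ! i \<le> b - 1" using F5 by fastforce
    show "C (b - 1) k" unfolding C_def
    proof (intro allI impI)
      fix i i' q
      assume h: "i < i'" "i' < k" "q < n" "p ! i \<le> b - 1" "p ! i' < p ! i" "p ! i' < p ! q" "p ! q < p ! i"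
      have "p ! i \<le> m" using h(4) bm by arith
      then show "i < q \<and> q < i'" using Cm[unfolded C_def, rule_format, of i i' q] h by blast
    qed
    show "k = 0 \<or> b - 1 < p ! (k - 1)" by (rule disjI2) (use I3 bm in linarith)
  qed
  show ?thesis using b1 bm mvs inv by blast
qed

end



declare upt_Suc[simp]

context srt
begin

lemma main: "Inv m k \<Longrightarrow> mv\<^sup>*\<^sup>* (st p m k) (st p 0 n)"
proof (induction m arbitrary: k rule: less_induct)
  case (less m)
  from less.prems have mn: "m \<le> n" "k \<le> n" and I1: "\<forall>i. k \<le> i \<longrightarrow> i < n \<longrightarrow> p ! i \<le> m"
    and Cm: "C m k" and I3: "k = 0 \<or> m < p ! (k - 1)"
    unfolding Inv_def by auto
  show ?case
  proof (cases "m = 0")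
    case True
    have "k = n"
    proof (rule ccontr)
      assume "k \<noteq> n" then have "k < n" using mn by simp
      then show False using I1 val_range[of k] True by auto
    qed
    then show ?thesis using True by simp
  next
    case False
    note m0 = False
    obtain j where j: "j < n" "p ! j = m" using val_ex[of m] False mn by auto
    show ?thesis
    proof (cases "k \<le> j")
      case True
      have r1: "mv\<^sup>*\<^sup>* (st p m k) (st p m (Suc j))"
        by (rule push_many) (use True j I1 in auto)
      have r2: "mv (st p m (Suc j)) (st p (m - 1) (Suc j))"
        by (rule push_case_move) (use False j mn in auto)
      have r3: "mv\<^sup>*\<^sup>* (st p (m - 1) (Suc j)) (st p 0 n)"
        by (rule less.IH) (use False push_case_inv[OF less.prems False j True] in auto)
      show ?thesis using r1 r2 r3 by (meson rtranclp.rtrancl_into_rtrancl rtranclp_trans)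
    next
      case False
      then have jk: "j < k" by simp
      obtain b where b: "1 \<le> b" "b \<le> m" "mv (st p m k) (st p (b - 1) k)" "Inv (b - 1) k"
        using pop_case[OF less.prems m0 j jk] by blast
      have r: "mv\<^sup>*\<^sup>* (st p (b - 1) k) (st p 0 n)" by (rule less.IH) (use b in auto)
      show ?thesis using b(3) r by (meson converse_rtranclp_into_rtranclp)
    qed
  qed
qed

lemma sortable: "fork_sortable 1 t p"
proof -
  have "mv\<^sup>*\<^sup>* (st p n 0) (st p 0 n)" by (rule main[OF Inv_init])
  then show ?thesis unfolding fork_sortable_def init_eq final_eq by simp
qed

end

declare upt_Suc[simp del]

lemma mono_ge: "(\<forall>i j. i < j \<longrightarrow> j < N \<longrightarrow> (f::nat\<Rightarrow>nat) i < f j) \<Longrightarrow> i < N \<Longrightarrow> i \<le> f i"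
proof (induction i)
  case 0 then show ?case by simp
next
  case (Suc i)
  have a: "f i < f (Suc i)" using Suc.prems by blast
  have b: "i \<le> f i" using Suc.IH Suc.prems by simp
  show ?case using a b by simp
qed

lemma mono_le: "(\<forall>i j. i < j \<longrightarrow> j < N \<longrightarrow> (f::nat\<Rightarrow>nat) i < f j) \<Longrightarrow> i + d = N - 1 \<Longrightarrow> i < N \<Longrightarrow> f i + d \<le> f (N - 1)"
proof (induction d arbitrary: i)
  case 0 then show ?case by simp
next
  case (Suc d)
  have "f (Suc i) + d \<le> f (N - 1)" using Suc.IH[of "Suc i"] Suc.prems by simp
  moreover have "f i < f (Suc i)" using Suc.prems by simp
  ultimately show ?case by simp
qed

lemma mono_id: "(\<forall>i j. i < j \<longrightarrow> j < N \<longrightarrow> (f::nat\<Rightarrow>nat) i < f j) \<Longrightarrow> (\<forall>i<N. f i < N) \<Longrightarrow> i < N \<Longrightarrow> f i = i"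
proof -
  assume h: "\<forall>i j. i < j \<longrightarrow> j < N \<longrightarrow> f i < f j" "\<forall>i<N. f i < N" "i < N"
  have "i \<le> f i" using mono_ge[OF h(1) h(3)] .
  moreover have "f i + (N - 1 - i) \<le> f (N - 1)" using mono_le[OF h(1), of i "N - 1 - i"] h(3) by simp
  moreover have "f (N - 1) < N" using h(2) h(3) by simp
  ultimately show "f i = i" by linarith
qed

lemma perm_rank:
  assumes q: "is_perm q" and i: "i < length q"
  shows "q ! i = card {j. j < length q \<and> q ! j \<le> q ! i}"
proof -
  have d: "distinct q" and s: "set q = {1..length q}" using q by (auto simp: is_perm_def)
  have inj: "inj_on (nth q) {j. j < length q \<and> q ! j \<le> q ! i}"
    using d by (auto simp: inj_on_def nth_eq_iff_index_eq)
  have im: "nth q ` {j. j < length q \<and> q ! j \<le> q ! i} = {1..q ! i}"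
  proof
    show "nth q ` {j. j < length q \<and> q ! j \<le> q ! i} \<subseteq> {1..q ! i}"
      using s nth_mem by fastforce
    show "{1..q ! i} \<subseteq> nth q ` {j. j < length q \<and> q ! j \<le> q ! i}"
    proof
      fix v assume v: "v \<in> {1..q ! i}"
      have "q ! i \<le> length q" using s nth_mem[OF i] by auto
      then have "v \<in> set q" using s v by auto
      then obtain j where "j < length q" "q ! j = v" by (auto simp: in_set_conv_nth)
      then show "v \<in> nth q ` {j. j < length q \<and> q ! j \<le> q ! i}" using v by auto
    qed
  qed
  have "card {j. j < length q \<and> q ! j \<le> q ! i} = card {1..q ! i}"
    using card_image[OF inj] im by simp
  then show ?thesis by simp
qed

lemma perm_eq:
  assumes "is_perm q" "is_perm r" "length q = length r"
    and iso: "\<forall>i<length q. \<forall>j<length q. q ! i < q ! j \<longleftrightarrow> r ! i < r ! j"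
  shows "q = r"
proof (rule nth_equalityI)
  show "length q = length r" by fact
  fix i assume i: "i < length q"
  have "{j. j < length q \<and> q ! j \<le> q ! i} = {j. j < length r \<and> r ! j \<le> r ! i}"
    using iso i assms(3) by (auto simp: not_less[symmetric])
  then show "q ! i = r ! i" using perm_rank[OF assms(1) i] perm_rank[OF assms(2)] i assms(3) by simp
qed

lemma emb_eq:
  assumes "is_perm q" "is_perm r" "emb q r" "length q = length r"
  shows "q = r"
proof -
  obtain f where f: "\<forall>i j. i < j \<longrightarrow> j < length q \<longrightarrow> f i < f j"
     "\<forall>i < length q. f i < length r"
     "\<forall>i < length q. \<forall>j < length q. q ! i < q ! j \<longleftrightarrow> r ! (f i) < r ! (f j)"
    using assms(3) unfolding emb_def by blast
  have id: "\<And>i. i < length q \<Longrightarrow> f i = i" using mono_id[OF f(1)] f(2) assms(4) by simp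
  show ?thesis
    by (rule perm_eq[OF assms(1,2,4)]) (use f(3) id in simp)
qed

lemma famL_asc:
  assumes e: "emb L (famL t')" and l: "length L = 4" and ij: "i < j" "j < 3" and lt: "L ! i < L ! j"
  shows False
proof -
  obtain f where f: "\<forall>i j. i < j \<longrightarrow> j < length L \<longrightarrow> f i < f j"
     "\<forall>i < length L. f i < length (famL t')"
     "\<forall>i < length L. \<forall>j < length L. L ! i < L ! j \<longleftrightarrow> famL t' ! (f i) < famL t' ! (f j)"
    using e unfolding emb_def by blast
  have a: "f i < f j" "f j < f 3" using f(1) ij l by auto
  have b: "f 3 < t' + 2" using f(2) l famL_len by simp
  have c: "famL t' ! (f i) = t' + 1 - f i" "famL t' ! (f j) = t' + 1 - f j"
    using famL_nth[of "f i" t'] famL_nth[of "f j" t'] a b by auto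
  have "famL t' ! (f i) < famL t' ! (f j)" using f(3) lt ij l by auto
  then show False using c a b by simp
qed

definition good :: "nat \<Rightarrow> nat list \<Rightarrow> bool" where
  "good N out \<longleftrightarrow> length out \<le> N \<and> out = [Suc N - length out..<Suc N]"

lemma good_app: "good N (X @ out) \<Longrightarrow> good N out"
proof -
  assume g: "good N (X @ out)"
  then have l: "length X + length out \<le> N" and e: "X @ out = [Suc N - (length X + length out)..<Suc N]"
    unfolding good_def by auto
  have "out = drop (length X) (X @ out)" by simp
  also have "\<dots> = [Suc N - (length X + length out) + length X..<Suc N]" unfolding e by (simp only: drop_upt)
  also have "Suc N - (length X + length out) + length X = Suc N - length out" using l by simp
  finally show ?thesis unfolding good_def using l by simp
qed

lemma good_hd: "good N out \<Longrightarrow> out \<noteq> [] \<Longrightarrow> out ! 0 = Suc N - length out"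
proof -
  assume g: "good N out" and ne: "out \<noteq> []"
  define ln where "ln = length out"
  have l: "ln \<le> N" "0 < ln" using g ne unfolding good_def ln_def by auto
  have e: "out = [Suc N - ln..<Suc N]" using g unfolding good_def ln_def by simp
  have "[Suc N - ln..<Suc N] ! 0 = Suc N - ln" using l by (simp add: nth_upt)
  then show ?thesis unfolding ln_def[symmetric] by (subst e) simp
qed

lemma good_mem: "good N out \<Longrightarrow> out \<noteq> [] \<Longrightarrow> N \<in> set out"
proof -
  assume g: "good N out" and ne: "out \<noteq> []"
  define ln where "ln = length out"
  have l: "ln \<le> N" "0 < ln" using g ne unfolding good_def ln_def by auto
  have e: "out = [Suc N - ln..<Suc N]" using g unfolding good_def ln_def by simp
  have "N \<in> set [Suc N - ln..<Suc N]" using l by simp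
  then show ?thesis by (subst e)
qed

lemma mv_out: "fork_move s t a b \<Longrightarrow> \<exists>X. snd (snd b) = X @ snd (snd a)"
  by (induction rule: fork_move.induct) auto

lemma mv_cases:
  "fork_move 1 t a b \<Longrightarrow> (\<exists>x inp w out. a = (x # inp, w, out) \<and> b = (inp, x # w, out)) \<or>
     (\<exists>l inp w out. 1 \<le> l \<and> enat l \<le> t \<and> l \<le> length w \<and> a = (inp, w, out) \<and> b = (inp, drop l w, take l w @ out))"
proof (induction rule: fork_move.induct)
  case (push k inp w out)
  then have "k = 1" by (simp add: one_enat_def)
  then obtain x inp' where "inp = x # inp'" using push by (cases inp) auto
  then show ?case using \<open>k = 1\<close> by auto
next
  case (pop l w inp out)
  then show ?case by blast
qed

lemma reach_inv:
  assumes r: "(fork_move 1 t)\<^sup>*\<^sup>* a b"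
    and a: "Pr a \<or> \<not> good N (snd (snd a))"
    and stp: "\<And>x y. Pr x \<Longrightarrow> fork_move 1 t x y \<Longrightarrow> Pr y \<or> \<not> good N (snd (snd y))"
  shows "Pr b \<or> \<not> good N (snd (snd b))"
  using r a
proof (induction rule: rtranclp_induct)
  case base then show ?case by simp
next
  case (step y z)
  then have "Pr y \<or> \<not> good N (snd (snd y))" by simp
  then show ?case
  proof
    assume "Pr y" then show ?thesis using step.hyps(2) by (rule stp)
  next
    assume ng: "\<not> good N (snd (snd y))"
    obtain X where "snd (snd z) = X @ snd (snd y)" using mv_out[OF step.hyps(2)] by blast
    then show ?thesis using ng good_app by metis
  qed
qed

definition succs :: "fstate \<Rightarrow> fstate list" where
  "succs a = (case a of (inp, w, out) \<Rightarrow>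
     (case inp of [] \<Rightarrow> [] | x # inp' \<Rightarrow> [(inp', x # w, out)]) @
     map (\<lambda>l. (inp, drop l w, take l w @ out)) [1..<Suc (length w)])"

lemma mv_succs: "fork_move 1 t a b \<Longrightarrow> b \<in> set (succs a)"
proof -
  assume "fork_move 1 t a b"
  from mv_cases[OF this] show ?thesis
  proof (elim disjE exE conjE)
    fix x inp w out assume "a = (x # inp, w, out)" "b = (inp, x # w, out)"
    then show ?thesis by (simp add: succs_def)
  next
    fix l inp w out assume "1 \<le> l" "enat l \<le> t" "l \<le> length w" "a = (inp, w, out)" "b = (inp, drop l w, take l w @ out)"
    then show ?thesis by (auto simp: succs_def split: list.splits)
  qed
qed

definition chk :: "nat \<Rightarrow> fstate list \<Rightarrow> bool" where
  "chk N R = list_all (\<lambda>a. list_all (\<lambda>b. b \<in> set R \<or> \<not> good N (snd (snd b))) (succs a)) R"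

lemma not_sortable_fin:
  assumes start: "(L, [], []) \<in> set R"
    and fin: "([], [], [1..<Suc (length L)]) \<notin> set R"
    and ch: "chk (length L) R"
  shows "\<not> fork_sortable 1 t L"
proof
  have clos: "\<forall>a\<in>set R. \<forall>b\<in>set (succs a). b \<in> set R \<or> \<not> good (length L) (snd (snd b))"
    using ch unfolding chk_def by (simp add: list_all_iff)
  assume "fork_sortable 1 t L"
  then have r: "(fork_move 1 t)\<^sup>*\<^sup>* (L, [], []) ([], [], [1..<Suc (length L)])"
    unfolding fork_sortable_def by simp
  have "([], [], [1..<Suc (length L)]) \<in> set R \<or> \<not> good (length L) (snd (snd (([], [], [1..<Suc (length L)]) :: fstate)))"
    by (rule reach_inv[OF r]) (use start clos mv_succs in auto)
  moreover have "good (length L) [1..<Suc (length L)]" unfolding good_def by simp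
  ultimately show False using fin by simp
qed

lemma ns1: "\<not> fork_sortable 1 t [2,3,1,4]"
  by (rule not_sortable_fin[where R = "[([], [1,3,2], [4]), ([], [4,1,3,2], []), ([1,4], [3,2], []), ([2,3,1,4], [], []), ([3,1,4], [2], []), ([4], [1,3,2], [])]"])
     code_simp+

lemma ns2: "\<not> fork_sortable 1 t [3,1,2,4]"
  by (rule not_sortable_fin[where R = "[([], [2,1,3], [4]), ([], [4,2,1,3], []), ([1,2,4], [3], []), ([2,4], [1,3], []), ([3,1,2,4], [], []), ([4], [2,1,3], [])]"])
     code_simp+

lemma ns3: "\<not> fork_sortable 1 t [3,1,4,2]"
  by (rule not_sortable_fin[where R = "[([], [2,1,3], [4]), ([], [2,4,1,3], []), ([1,4,2], [3], []), ([2], [1,3], [4]), ([2], [4,1,3], []), ([3,1,4,2], [], []), ([4,2], [1,3], [])]"])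
     code_simp+



lemma ns_fam: "\<not> fork_sortable 1 (enat t') (famL t')"
proof
  define N where "N = t' + 2"
  define L where "L = famL t'"
  have LN: "length L = N" unfolding L_def N_def by (rule famL_len)
  have N2: "2 \<le> N" unfolding N_def by simp
  have revL: "rev L = N # [1..<N]" unfolding L_def N_def famL_def by simp
  have takeL: "\<And>k x. k < N \<Longrightarrow> x \<in> set (take k L) \<Longrightarrow> x < N"
  proof -
    fix k x assume k: "k < N" and x: "x \<in> set (take k L)"
    then obtain i where i: "i < k" "L ! i = x" using LN by (auto simp: in_set_conv_nth)
    then have "i \<le> t'" using k unfolding N_def by simp
    then have "x = t' + 1 - i" using famL_nth[of i t'] i k unfolding L_def N_def by simp
    then show "x < N" unfolding N_def by simp
  qed
  define Pr where "Pr a \<longleftrightarrow> (\<exists>k \<le> N. a = (drop k L, rev (take k L), [])) \<or> a = ([], [1..<N], [N])" for a :: fstate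
  assume "fork_sortable 1 (enat t') (famL t')"
  then have r: "(fork_move 1 (enat t'))\<^sup>*\<^sup>* (L, [], []) ([], [], [1..<Suc N])"
    unfolding fork_sortable_def L_def[symmetric] LN by simp
  have start: "Pr (L, [], []) \<or> \<not> good N (snd (snd ((L, [], []) :: fstate)))"
    unfolding Pr_def by (intro disjI1) (rule exI[of _ 0], simp)
  have step: "Pr y \<or> \<not> good N (snd (snd y))" if px: "Pr x" and mx: "fork_move 1 (enat t') x y" for x y
    using mv_cases[OF mx]
  proof (elim disjE exE conjE)
    fix a inp w out assume xe: "x = (a # inp, w, out)" and ye: "y = (inp, a # w, out)"
    from px[unfolded Pr_def] xe obtain k where k: "k \<le> N" "drop k L = a # inp" "w = rev (take k L)" "out = []"
      by auto
    then have kN: "k < N" using LN by (metis drop_all list.simps(3) not_le)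
    have e: "drop k L = L ! k # drop (Suc k) L" using kN LN by (simp add: Cons_nth_drop_Suc)
    have "a = L ! k" "inp = drop (Suc k) L" using k(2) e by auto
    moreover have "rev (take (Suc k) L) = L ! k # rev (take k L)" using kN LN by (simp add: take_Suc_conv_app_nth)
    ultimately have "y = (drop (Suc k) L, rev (take (Suc k) L), [])" using ye k by simp
    then have "Pr y" unfolding Pr_def using kN by (intro disjI1) (rule exI[of _ "Suc k"], simp)
    then show ?thesis by simp
  next
    fix l inp w out assume l: "1 \<le> l" "enat l \<le> enat t'" "l \<le> length w"
      and xe: "x = (inp, w, out)" and ye: "y = (inp, drop l w, take l w @ out)"
    have lt: "l \<le> t'" using l(2) by simp
    from px[unfolded Pr_def] xe
    consider (S1) k where "k \<le> N" "inp = drop k L" "w = rev (take k L)" "out = []"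
      | (S2) "inp = []" "w = [1..<N]" "out = [N]" by auto
    then show ?thesis
    proof cases
      case (S1 k)
      show ?thesis
      proof (cases "k < N")
        case True
        have ne: "take l w \<noteq> []" using l by auto
        have "N \<notin> set (take l w)"
        proof
          assume "N \<in> set (take l w)"
          then have "N \<in> set (take k L)" using S1 by (metis in_set_takeD set_rev)
          then show False using takeL[OF True] by blast
        qed
        then have "\<not> good N (take l w)" using good_mem ne by blast
        then show ?thesis using ye S1 by simp
      next
        case False
        then have kN: "k = N" using S1 by simp
        have w: "w = N # [1..<N]" using S1 kN LN revL by simp
        show ?thesis
        proof (cases "l = 1")
          case True
          have "y = ([], [1..<N], [N])" using ye True w S1 kN LN by simp
          then show ?thesis unfolding Pr_def by simp
        next
          case False
          then have l2: "2 \<le> l" using l by simp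
          have o: "snd (snd y) = take l w" using ye S1 by simp
          have len: "length (take l w) = l" using l by simp
          have h0: "take l w ! 0 = N" using w l by simp
          have "\<not> good N (take l w)"
          proof
            assume g: "good N (take l w)"
            have ne: "take l w \<noteq> []" using l by auto
            have "take l w ! 0 = Suc N - l" using good_hd[OF g ne] len by simp
            then show False using h0 l2 N2 by arith
          qed
          then show ?thesis using o by simp
        qed
      qed
    next
      case S2
      have o: "snd (snd y) = take l [1..<N] @ [N]" using ye S2 by simp
      have len: "length (take l [1..<N] @ [N]) = Suc l" using l S2 by simp
      have h0: "(take l [1..<N] @ [N]) ! 0 = 1" using l N2 lt unfolding N_def by (simp add: nth_append)
      have "\<not> good N (take l [1..<N] @ [N])"
      proof
        assume g: "good N (take l [1..<N] @ [N])"
        have "(take l [1..<N] @ [N]) ! 0 = Suc N - Suc l" using good_hd[OF g] len by simp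
        then show False using h0 lt unfolding N_def by arith
      qed
      then show ?thesis using o by simp
    qed
  qed
  have "Pr ([], [], [1..<Suc N]) \<or> \<not> good N (snd (snd (([], [], [1..<Suc N]) :: fstate)))"
    by (rule reach_inv[OF r start step])
  moreover have "good N [1..<Suc N]" unfolding good_def by simp
  moreover have ne: "[Suc 0..<N] \<noteq> []" using N2 by simp
  moreover have ne2: "[Suc 0..<Suc N] \<noteq> []" using N2 by simp
  moreover have "\<not> Pr ([], [], [1..<Suc N])" unfolding Pr_def using ne ne2 by (auto simp del: upt_eq_Nil_conv)
  ultimately show False by simp
qed



lemma perm4a: "is_perm [2,3,1,4]" by code_simp
lemma perm4b: "is_perm [3,1,2,4]" by code_simp
lemma perm4c: "is_perm [3,1,4,2]" by code_simp

lemma perm_fam: "is_perm (famL t')"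
proof -
  have "set (famL t') = {1..t' + 2}" unfolding famL_def by auto
  moreover have "distinct (famL t')" unfolding famL_def by simp
  ultimately show ?thesis unfolding is_perm_def famL_len by simp
qed

lemma charU:
  assumes tpos: "1 \<le> t" and t2: "\<forall>t'. t = enat t' \<longrightarrow> 2 \<le> t'"
  shows "forkU 1 t = {[2,3,1,4],[3,1,2,4],[3,1,4,2]} \<union> {famL t' | t'. t = enat t'}"
    (is "_ = ?S")
proof -
  have notsort: "\<not> fork_sortable 1 t L" if "L \<in> ?S" for L
    using that ns1 ns2 ns3 ns_fam by auto
  have perms: "is_perm L" if "L \<in> ?S" for L
    using that perm4a perm4b perm4c perm_fam by auto
  have avoid: "fork_sortable 1 t q" if q: "is_perm q" and av: "\<forall>L\<in>?S. \<not> emb L q" for q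
  proof -
    have "srt q t" unfolding srt_def using q tpos av by auto
    then show ?thesis by (rule srt.sortable)
  qed
  have len: "4 \<le> length L" if "L \<in> ?S" for L
    using that t2 famL_len by auto
  have minimal: "fork_sortable 1 t q" if L: "L \<in> ?S" and q: "is_perm q" "emb q L" "q \<noteq> L" for L q
  proof -
    have lq: "length q < length L"
      using emb_length[OF q(2)] emb_eq[OF q(1) perms[OF L] q(2)] q(3) by linarith
    have "\<forall>L'\<in>?S. \<not> emb L' q"
    proof (intro ballI notI)
      fix L' assume L': "L' \<in> ?S" and e: "emb L' q"
      have l': "length L' \<le> length q" using emb_length[OF e] .
      show False
      proof (cases "L \<in> {[2,3,1,4],[3,1,2,4],[3,1,4,2]}")
        case True
        then have "length L = 4" by auto
        then show False using lq l' len[OF L'] by simp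
      next
        case False
        then obtain t' where tt: "t = enat t'" "L = famL t'" using L by auto
        have eL: "emb L' (famL t')" using emb_trans[OF e] q(2) tt by simp
        show False
        proof (cases "L' \<in> {[2,3,1,4],[3,1,2,4],[3,1,4,2]}")
          case True
          then consider "L' = [2,3,1,4]" | "L' = [3,1,2,4]" | "L' = [3,1,4,2]" by auto
          then show False
          proof cases
            case 1 then show False using famL_asc[OF eL, of 0 1] by simp
          next
            case 2 then show False using famL_asc[OF eL, of 1 2] by simp
          next
            case 3 then show False using famL_asc[OF eL, of 1 2] by simp
          qed
        next
          case False
          then obtain t'' where "t = enat t''" "L' = famL t''" using L' by auto
          then have "L' = L" using tt by simp
          then show False using lq l' by simp
        qed
      qed
    qed
    then show ?thesis by (rule avoid[OF q(1)])
  qed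
  show ?thesis
  proof
    show "forkU 1 t \<subseteq> ?S"
    proof
      fix p assume "p \<in> forkU 1 t"
      then have p: "is_perm p" "\<not> fork_sortable 1 t p"
        and mn: "\<forall>q. is_perm q \<and> involved q p \<and> q \<noteq> p \<longrightarrow> q \<in> forkF 1 t"
        unfolding forkU_def forkF_def by auto
      obtain L where L: "L \<in> ?S" "emb L p"
        using avoid[OF p(1)] p(2) by blast
      show "p \<in> ?S"
      proof (rule ccontr)
        assume "p \<notin> ?S"
        then have "L \<noteq> p" using L by auto
        then have "L \<in> forkF 1 t" using mn perms[OF L(1)] L(2) involved_iff_emb by blast
        then show False using notsort[OF L(1)] unfolding forkF_def by simp
      qed
    qed
    show "?S \<subseteq> forkU 1 t"
    proof
      fix L assume L: "L \<in> ?S"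
      show "L \<in> forkU 1 t"
        unfolding forkU_def forkF_def
        using perms[OF L] notsort[OF L] minimal[OF L] involved_iff_emb by auto
    qed
  qed
qed

theorem mainTheorem4:
  shows "forkU 1 \<infinity> = {[2,3,1,4], [3,1,2,4], [3,1,4,2]} \<and>
    (\<forall>t::nat. t \<ge> 2 \<longrightarrow>
      forkU 1 (enat t) = {[2,3,1,4], [3,1,2,4], [3,1,4,2], rev [1..<t+2] @ [t+2]})"
proof
  show "forkU 1 \<infinity> = {[2,3,1,4], [3,1,2,4], [3,1,4,2]}"
    using charU[of \<infinity>] by simp
  show "\<forall>t::nat. t \<ge> 2 \<longrightarrow>
      forkU 1 (enat t) = {[2,3,1,4], [3,1,2,4], [3,1,4,2], rev [1..<t+2] @ [t+2]}"
  proof (intro allI impI)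
    fix t :: nat assume t: "t \<ge> 2"
    have "forkU 1 (enat t) = {[2,3,1,4],[3,1,2,4],[3,1,4,2]} \<union> {famL t' | t'. enat t = enat t'}"
      by (rule charU) (use t in \<open>auto simp: one_enat_def\<close>)
    also have "{famL t' | t'. enat t = enat t'} = {rev [1..<t+2] @ [t+2]}"
      by (auto simp: famL_def)
    finally show "forkU 1 (enat t) = {[2,3,1,4], [3,1,2,4], [3,1,4,2], rev [1..<t+2] @ [t+2]}"
      by auto
  qed
qed

end
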